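(* Let $\theta\in\mathbb R\setminus\mathbb Q$. Then $H^0(\mathcal A_\theta^{alg},{}_{-1}\mathcal A_\theta^{alg*})\cong\mathbb C^4$, and every class is $\mathbb Z_2$-invariant, so $H^0(\mathcal A_\theta^{alg},{}_{-1}\mathcal A_\theta^{alg*})^{\mathbb Z_2}\cong\mathbb C^4$. A basis is given by the four cocycles $\mathcal D_{a,b}$, $a,b\in\{0,1\}$, where $\mathcal D_{a,b}$ is the element $\sum\varphi_{n,m}U_1^nU_2^m$ of ${}_{-1}\mathcal A_\theta^{alg*}$ supported on $(n,m)\equiv(a,b)\pmod 2$ satisfying $U_1^{-1}\varphi=\varphi U_1$, $U_2^{-1}\varphi=\varphi U_2$ and $\varphi_{a,b}=1$.
   Context: Let $\lambda=e^{2\pi i\theta}$. $\mathcal A_\theta^{alg}$ is the complex algebra of finite linear combinations $\sum a_{n,m}U_1^nU_2^m$ generated by invertible $U_1,U_2$ with $U_2U_1=\lambda U_1U_2$. Its linear dual $\mathcal A_\theta^{alg*}$ is identified with the space of formal (arbitrary, not necessarily finitely supported) series $\sum_{(n,m)\in\mathbb Z^2}\varphi_{n,m}U_1^nU_2^m$ with the standard bimodule structure. $\mathbb Z_2$ acts on $\mathcal A_\theta^{alg}$ (and hence on $\mathcal A_\theta^{alg*}$ and on the cohomology) by the involution $\sigma(U_j)=U_j^{-1}$. ${}_{-1}\mathcal A_\theta^{alg*}$ is $\mathcal A_\theta^{alg*}$ with the bimodule structure twisted on the left: $\alpha\cdot a=\sigma(\alpha)a$, $a\cdot\alpha=a\alpha$.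 $H^\bullet(A,M)$ is Hochschild cohomology, and $(\cdot)^{\mathbb Z_2}$ denotes the invariants of the induced $\mathbb Z_2$-action. *)

theory Defs
  imports Complex_Main
begin

text \<open>Elements of the algebraic noncommutative torus and of its dual are both
represented by their coefficient functions on int x int: the coefficient at (n,m)
is the coefficient of U1^n U2^m.  Elements of the algebra have finite support;
elements of the dual are arbitrary formal series.\<close>

definition lam :: "real \<Rightarrow> complex" where
  "lam \<theta> = cis (2 * pi * \<theta>)"

definition alg :: "(int \<times> int \<Rightarrow> complex) set" where
  "alg = {f. finite {k. f k \<noteq> 0}}"

definition mono :: "int \<Rightarrow> int \<Rightarrow> int \<times> int \<Rightarrow> complex" where
  "mono n m = (\<lambda>k. if k = (n, m) then 1 else 0)"

text \<open>Left multiplication of a formal series by an algebra element, using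
U1^p U2^q U1^n' U2^m' = lam^(q n') U1^(p+n') U2^(q+m').\<close>
definition lmul :: "real \<Rightarrow> (int \<times> int \<Rightarrow> complex) \<Rightarrow> (int \<times> int \<Rightarrow> complex) \<Rightarrow> (int \<times> int \<Rightarrow> complex)" where
  "lmul \<theta> a \<phi> = (\<lambda>(n, m). \<Sum>(p, q)\<in>{k. a k \<noteq> 0}.
      a (p, q) * \<phi> (n - p, m - q) * lam \<theta> powi (q * (n - p)))"

definition rmul :: "real \<Rightarrow> (int \<times> int \<Rightarrow> complex) \<Rightarrow> (int \<times> int \<Rightarrow> complex) \<Rightarrow> (int \<times> int \<Rightarrow> complex)" where
  "rmul \<theta> \<phi> a = (\<lambda>(n, m). \<Sum>(p, q)\<in>{k. a k \<noteq> 0}.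
      \<phi> (n - p, m - q) * a (p, q) * lam \<theta> powi ((m - q) * p))"

text \<open>The involution sigma(U_j) = U_j^{-1}, i.e. U1^n U2^m maps to U1^-n U2^-m;
the same formula gives the induced Z2-action on the dual (formal series).\<close>
definition sigma :: "(int \<times> int \<Rightarrow> complex) \<Rightarrow> (int \<times> int \<Rightarrow> complex)" where
  "sigma f = (\<lambda>(n, m). f (- n, - m))"

text \<open>Left action in the twisted bimodule {}_{-1}A*: alpha . a = sigma(alpha) a.\<close>
definition tw_lmul :: "real \<Rightarrow> (int \<times> int \<Rightarrow> complex) \<Rightarrow> (int \<times> int \<Rightarrow> complex) \<Rightarrow> (int \<times> int \<Rightarrow> complex)" where
  "tw_lmul \<theta> a \<phi> = lmul \<theta> (sigma a) \<phi>"

definition H0_tw :: "real \<Rightarrow> (int \<times> int \<Rightarrow> complex) set" where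
  "H0_tw \<theta> = {\<phi>. \<forall>a\<in>alg. tw_lmul \<theta> a \<phi> = rmul \<theta> \<phi> a}"

definition D_cond :: "real \<Rightarrow> int \<Rightarrow> int \<Rightarrow> (int \<times> int \<Rightarrow> complex) \<Rightarrow> bool" where
  "D_cond \<theta> a b \<phi> \<longleftrightarrow>
     (\<forall>n m. \<phi> (n, m) \<noteq> 0 \<longrightarrow> (n - a) mod 2 = 0 \<and> (m - b) mod 2 = 0) \<and>
     lmul \<theta> (mono (-1) 0) \<phi> = rmul \<theta> \<phi> (mono 1 0) \<and>
     lmul \<theta> (mono 0 (-1)) \<phi> = rmul \<theta> \<phi> (mono 0 1) \<and>
     \<phi> (a, b) = 1"

definition D :: "real \<Rightarrow> int \<Rightarrow> int \<Rightarrow> (int \<times> int \<Rightarrow> complex)" where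
  "D \<theta> a b = (THE \<phi>. D_cond \<theta> a b \<phi>)"

end

theory Submission imports Defs begin

lemma pa: "(L::complex) \<noteq> 0 \<Longrightarrow> L powi a * L powi b = L powi (a+b)"
  by (simp add: power_int_add)

lemma lam_nz: "lam \<theta> \<noteq> 0" by (simp add: lam_def)

definition Qp :: "complex \<Rightarrow> (int\<times>int\<Rightarrow>complex) \<Rightarrow> bool" where
  "Qp L \<phi> \<longleftrightarrow> (\<forall>x y p q. \<phi>(x+2*p, y+2*q) = L powi (q*(x+2*p) + y*p) * \<phi>(x,y))"

definition Dfun :: "complex \<Rightarrow> int \<Rightarrow> int \<Rightarrow> int\<times>int \<Rightarrow> complex" where
  "Dfun L a b = (\<lambda>(n,m). if even (n-a) \<and> even (m-b) then L powi ((n*m-a*b) div 2) else 0)"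

lemma stepx:
  assumes L: "(L::complex) \<noteq> 0" and h1: "\<And>x y. \<phi>(x+2,y) = L powi y * \<phi>(x,y)"
  shows "\<phi>(x+2*p,y) = L powi (y*p) * \<phi>(x,y)"
proof (induction p rule: int_induct[where k=0])
  case base then show ?case by simp
next
  case (step1 i)
  have "\<phi>(x+2*(i+1),y) = \<phi>((x+2*i)+2,y)" by (simp add: algebra_simps)
  also have "\<dots> = L powi y * (L powi (y*i) * \<phi>(x,y))" using h1 step1 by simp
  also have "\<dots> = L powi (y*(i+1)) * \<phi>(x,y)" using L by (simp add: pa distrib_left add.commute)
  finally show ?case .
next
  case (step2 i)
  have "\<phi>(x+2*i,y) = \<phi>((x+2*(i-1))+2,y)" by (simp add: algebra_simps)
  also have "\<dots> = L powi y * \<phi>(x+2*(i-1),y)" by (rule h1)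
  finally have e: "L powi y * \<phi>(x+2*(i-1),y) = L powi y * (L powi (y*(i-1)) * \<phi>(x,y))"
    using step2 L by (simp add: pa algebra_simps)
  show ?case using e L by simp
qed

lemma stepy:
  assumes L: "(L::complex) \<noteq> 0" and h2: "\<And>x y. \<phi>(x,y+2) = L powi x * \<phi>(x,y)"
  shows "\<phi>(x,y+2*q) = L powi (x*q) * \<phi>(x,y)"
  using stepx[of L "\<lambda>(a,b). \<phi>(b,a)" y q x] L h2 by simp

lemma rec_Qp:
  assumes L: "(L::complex) \<noteq> 0" and h1: "\<And>x y. \<phi>(x+2,y) = L powi y * \<phi>(x,y)"
    and h2: "\<And>x y. \<phi>(x,y+2) = L powi x * \<phi>(x,y)"
  shows "Qp L \<phi>"
  unfolding Qp_def
proof (intro allI)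
  fix x y p q
  have "\<phi>(x+2*p, y+2*q) = L powi ((x+2*p)*q) * (L powi (y*p) * \<phi>(x,y))"
    using stepy[OF L h2] stepx[OF L h1] by simp
  also have "\<dots> = L powi (q*(x+2*p) + y*p) * \<phi>(x,y)" using L by (simp add: pa algebra_simps)
  finally show "\<phi>(x+2*p, y+2*q) = L powi (q*(x+2*p) + y*p) * \<phi>(x,y)" .
qed

lemma sum4: "(\<Sum>(a, b)\<in>{0::int,1} \<times> {0::int,1}. f a b) = f 0 0 + f 0 1 + f 1 0 + (f 1 1 :: 'a::comm_monoid_add)"
  by (simp add: add.assoc)

lemma supp_mono: "{k. mono p q k \<noteq> 0} = {(p,q)}" by (auto simp: mono_def)

lemma lmul_mono: "lmul \<theta> (mono p q) \<phi> (n,m) = \<phi>(n-p,m-q) * lam \<theta> powi (q*(n-p))"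
  by (simp add: lmul_def supp_mono, simp add: mono_def)

lemma rmul_mono: "rmul \<theta> \<phi> (mono p q) (n,m) = \<phi>(n-p,m-q) * lam \<theta> powi ((m-q)*p)"
  by (simp add: rmul_def supp_mono, simp add: mono_def)

lemma sigma_mono: "sigma (mono p q) = mono (-p) (-q)"
  by (auto simp: sigma_def mono_def fun_eq_iff)

lemma mono_alg: "mono p q \<in> alg" by (simp add: alg_def supp_mono)

lemma H0_Qp:
  assumes "\<phi> \<in> H0_tw \<theta>" shows "Qp (lam \<theta>) \<phi>"
proof (rule rec_Qp[OF lam_nz])
  have H: "\<And>p q. lmul \<theta> (mono (-p) (-q)) \<phi> = rmul \<theta> \<phi> (mono p q)"
  proof -
    fix p q
    have "lmul \<theta> (sigma (mono p q)) \<phi> = rmul \<theta> \<phi> (mono p q)"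
      using assms mono_alg[of p q] by (simp add: H0_tw_def tw_lmul_def)
    thus "lmul \<theta> (mono (-p) (-q)) \<phi> = rmul \<theta> \<phi> (mono p q)" by (simp add: sigma_mono)
  qed
  fix x y
  show "\<phi>(x+2,y) = lam \<theta> powi y * \<phi>(x,y)"
    using fun_cong[OF H[of 1 0], of "(x+1,y)"] by (simp add: lmul_mono rmul_mono add.assoc mult.commute)
  have "\<phi>(x,y+2) * lam \<theta> powi (- x) = \<phi>(x,y)"
    using fun_cong[OF H[of 0 1], of "(x,y+1)"] by (simp add: lmul_mono rmul_mono add.assoc)
  then have e: "\<phi>(x,y+2) * lam \<theta> powi (- x) * lam \<theta> powi x = \<phi>(x,y) * lam \<theta> powi x" by simp
  have i: "lam \<theta> powi (-x) * lam \<theta> powi x = 1" using lam_nz by (simp add: pa)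
  have "\<phi>(x,y+2) = \<phi>(x,y+2) * (lam \<theta> powi (-x) * lam \<theta> powi x)" by (simp add: i)
  also have "\<dots> = \<phi>(x,y) * lam \<theta> powi x" using e by (simp only: mult.assoc)
  finally have "\<phi>(x,y+2) = \<phi>(x,y) * lam \<theta> powi x" .
  then show "\<phi>(x,y+2) = lam \<theta> powi x * \<phi>(x,y)" by (simp add: mult.commute)
qed

lemma Qp_H0:
  assumes Q: "Qp (lam \<theta>) \<phi>" shows "\<phi> \<in> H0_tw \<theta>"
  unfolding H0_tw_def
proof (intro CollectI ballI)
  fix a assume "a \<in> alg"
  define L where "L = lam \<theta>"
  have L: "L \<noteq> 0" by (simp add: L_def lam_nz)
  define S where "S = {k. a k \<noteq> 0}"
  define h where "h = (\<lambda>(p::int,q::int). (-p,-q))"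
  have inj: "inj_on h S" by (auto simp: h_def inj_on_def)
  have img: "{k. sigma a k \<noteq> 0} = h ` S"
    by (auto simp: S_def h_def sigma_def image_iff) (metis minus_minus)
  show "tw_lmul \<theta> a \<phi> = rmul \<theta> \<phi> a"
  proof (rule ext, clarify)
    fix n m
    have "tw_lmul \<theta> a \<phi> (n,m) = (\<Sum>(p, q)\<in>h ` S. sigma a (p, q) * \<phi> (n - p, m - q) * L powi (q * (n - p)))"
      by (simp add: tw_lmul_def lmul_def img L_def)
    also have "\<dots> = (\<Sum>(p, q)\<in>S. a (p, q) * \<phi> (n + p, m + q) * L powi (-q * (n + p)))"
      by (subst sum.reindex[OF inj]) (auto simp: h_def sigma_def intro!: sum.cong)
    also have "\<dots> = (\<Sum>(p, q)\<in>S. \<phi> (n - p, m - q) * a (p, q) * L powi ((m - q) * p))"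
    proof (rule sum.cong, simp, clarify)
      fix p q
      have e: "\<phi>(n+p,m+q) = L powi (q*(n+p) + (m-q)*p) * \<phi>(n-p,m-q)"
        using Q[unfolded Qp_def, rule_format, of "n-p" p "m-q" q] L_def by (simp add: algebra_simps)
      have "L powi (q*(n+p) + (m-q)*p) * L powi (-q * (n + p)) = L powi ((m-q)*p)"
        using L by (simp add: pa)
      then show "a (p, q) * \<phi> (n + p, m + q) * L powi (-q * (n + p)) = \<phi> (n - p, m - q) * a (p, q) * L powi ((m - q) * p)"
        by (simp add: e)
    qed
    also have "\<dots> = rmul \<theta> \<phi> a (n,m)" by (simp add: rmul_def S_def L_def)
    finally show "tw_lmul \<theta> a \<phi> (n,m) = rmul \<theta> \<phi> a (n,m)" .
  qed
qed

lemma div2_plus: "(u + 2*v) div 2 = u div 2 + (v::int)" by simp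

lemma Dfun_x2: "Dfun L a b (x+2,y) = L powi y * Dfun L a b (x,y)" if L: "L \<noteq> 0"
proof -
  have e: "even (x+2-a) \<longleftrightarrow> even (x-a)" by presburger
  have d: "((x+2)*y - a*b) div 2 = (x*y-a*b) div 2 + y"
    using div2_plus[of "x*y-a*b" y] by (simp add: algebra_simps)
  show ?thesis using L by (simp add: Dfun_def e d pa add.commute)
qed

lemma Dfun_y2: "Dfun L a b (x,y+2) = L powi x * Dfun L a b (x,y)" if L: "L \<noteq> 0"
proof -
  have e: "even (y+2-b) \<longleftrightarrow> even (y-b)" by presburger
  have d: "(x*(y+2) - a*b) div 2 = (x*y-a*b) div 2 + x"
    using div2_plus[of "x*y-a*b" x] by (simp add: algebra_simps)
  show ?thesis using L by (simp add: Dfun_def e d pa add.commute)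
qed

lemma Qp_Dfun: "L \<noteq> 0 \<Longrightarrow> Qp L (Dfun L a b)"
  by (rule rec_Qp) (auto simp: Dfun_x2 Dfun_y2)

lemma Qp_at:
  assumes Q: "Qp L \<phi>" and "even (n-a)" "even (m-b)"
  shows "\<phi>(n,m) = \<phi>(a,b) * L powi ((n*m-a*b) div 2)"
proof -
  define p where "p = (n-a) div 2"
  define q where "q = (m-b) div 2"
  have n: "n = a + 2*p" using assms(2) by (simp add: p_def)
  have m: "m = b + 2*q" using assms(3) by (simp add: q_def)
  have "n*m - a*b = 2*(q*(a+2*p)+b*p)" by (simp add: n m algebra_simps)
  then have ex: "(n*m-a*b) div 2 = q*(a+2*p)+b*p" by simp
  have "\<phi>(a+2*p,b+2*q) = L powi (q*(a+2*p)+b*p) * \<phi>(a,b)" using Q[unfolded Qp_def, rule_format, of a p b q] .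
  moreover have "\<phi>(n,m) = \<phi>(a+2*p,b+2*q)" using n m by simp
  ultimately show ?thesis unfolding ex by (simp add: mult.commute)
qed

lemma Dcond_Qp:
  assumes "D_cond \<theta> a b \<phi>" shows "Qp (lam \<theta>) \<phi>"
proof (rule rec_Qp[OF lam_nz])
  have c1: "lmul \<theta> (mono (-1) 0) \<phi> = rmul \<theta> \<phi> (mono 1 0)"
   and c2: "lmul \<theta> (mono 0 (-1)) \<phi> = rmul \<theta> \<phi> (mono 0 1)" using assms by (auto simp: D_cond_def)
  fix x y
  show "\<phi>(x+2,y) = lam \<theta> powi y * \<phi>(x,y)"
    using fun_cong[OF c1, of "(x+1,y)"] by (simp add: lmul_mono rmul_mono add.assoc mult.commute)
  have "\<phi>(x,y+2) * lam \<theta> powi (- x) = \<phi>(x,y)"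
    using fun_cong[OF c2, of "(x,y+1)"] by (simp add: lmul_mono rmul_mono add.assoc)
  then have e: "\<phi>(x,y+2) * lam \<theta> powi (- x) * lam \<theta> powi x = \<phi>(x,y) * lam \<theta> powi x" by simp
  have i: "lam \<theta> powi (-x) * lam \<theta> powi x = 1" using lam_nz by (simp add: pa)
  have "\<phi>(x,y+2) = \<phi>(x,y+2) * (lam \<theta> powi (-x) * lam \<theta> powi x)" by (simp add: i)
  also have "\<dots> = \<phi>(x,y) * lam \<theta> powi x" using e by (simp only: mult.assoc)
  finally have "\<phi>(x,y+2) = \<phi>(x,y) * lam \<theta> powi x" .
  then show "\<phi>(x,y+2) = lam \<theta> powi x * \<phi>(x,y)" by (simp add: mult.commute)
qed

lemma Dcond_unique:
  assumes "D_cond \<theta> a b \<phi>" shows "\<phi> = Dfun (lam \<theta>) a b"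
proof (rule ext, clarify)
  fix n m
  have Q: "Qp (lam \<theta>) \<phi>" by (rule Dcond_Qp[OF assms])
  have s: "\<phi>(n,m) \<noteq> 0 \<Longrightarrow> even (n-a) \<and> even (m-b)" and one: "\<phi>(a,b) = 1"
    using assms by (auto simp: D_cond_def even_iff_mod_2_eq_zero)
  show "\<phi>(n,m) = Dfun (lam \<theta>) a b (n,m)"
  proof (cases "even (n-a) \<and> even (m-b)")
    case True then show ?thesis using Qp_at[OF Q, of n a m b] one by (simp add: Dfun_def)
  next
    case False then show ?thesis using s by (auto simp: Dfun_def)
  qed
qed

lemma Dfun_cond: "D_cond \<theta> a b (Dfun (lam \<theta>) a b)"
proof -
  let ?L = "lam \<theta>"
  have L: "?L \<noteq> 0" by (rule lam_nz)
  have c1: "lmul \<theta> (mono (-1) 0) (Dfun ?L a b) = rmul \<theta> (Dfun ?L a b) (mono 1 0)"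
  proof (rule ext, clarify)
    fix n m
    show "lmul \<theta> (mono (-1) 0) (Dfun ?L a b) (n,m) = rmul \<theta> (Dfun ?L a b) (mono 1 0) (n,m)"
      using Dfun_x2[OF L, of a b "n-1" m] by (simp add: lmul_mono rmul_mono mult.commute add.commute)
  qed
  have c2: "lmul \<theta> (mono 0 (-1)) (Dfun ?L a b) = rmul \<theta> (Dfun ?L a b) (mono 0 1)"
  proof (rule ext, clarify)
    fix n m
    have i: "?L powi n * ?L powi (-n) = 1" using L by (simp add: pa)
    have e: "Dfun ?L a b (n,m+1) = ?L powi n * Dfun ?L a b (n,m-1)"
      using Dfun_y2[OF L, of a b n "m-1"] by (simp add: add.commute)
    have "lmul \<theta> (mono 0 (-1)) (Dfun ?L a b) (n,m) = Dfun ?L a b (n,m+1) * ?L powi (-n)"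
      by (simp add: lmul_mono)
    also have "\<dots> = (?L powi n * ?L powi (-n)) * Dfun ?L a b (n,m-1)" by (simp only: e mult_ac)
    also have "\<dots> = rmul \<theta> (Dfun ?L a b) (mono 0 1) (n,m)" by (simp add: i rmul_mono)
    finally show "lmul \<theta> (mono 0 (-1)) (Dfun ?L a b) (n,m) = rmul \<theta> (Dfun ?L a b) (mono 0 1) (n,m)" .
  qed
  have s: "\<forall>n m. Dfun ?L a b (n, m) \<noteq> 0 \<longrightarrow> (n - a) mod 2 = 0 \<and> (m - b) mod 2 = 0"
    by (simp add: Dfun_def even_iff_mod_2_eq_zero)
  have v: "Dfun ?L a b (a,b) = 1" by (simp add: Dfun_def)
  show ?thesis unfolding D_cond_def using s c1 c2 v by blast
qed

lemma D_eq: "D \<theta> a b = Dfun (lam \<theta>) a b"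
  unfolding D_def by (rule the_equality) (rule Dfun_cond, erule Dcond_unique)

lemma Dfun_nm: "Dfun L a b (n,m) = (if even (n-a) \<and> even (m-b) then L powi ((n*m-a*b) div 2) else 0)"
  unfolding Dfun_def by (simp only: prod.case)
lemma Dfun_zero: "\<not>(even (n-a) \<and> even (m-b)) \<Longrightarrow> Dfun L a b (n,m) = 0"
  unfolding Dfun_nm by (rule if_not_P)
lemma Dfun_val: "even (n-a) \<Longrightarrow> even (m-b) \<Longrightarrow> Dfun L a b (n,m) = L powi ((n*m-a*b) div 2)"
  unfolding Dfun_nm by (rule if_P) (rule conjI)

lemma Qp_decomp_pt:
  assumes Q: "Qp L \<phi>"
  shows "\<phi>(n,m) = (\<Sum>(a, b)\<in>{0::int,1} \<times> {0::int,1}. \<phi>(a,b) * Dfun L a b (n,m))"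
proof -
  have S: "(\<Sum>(a, b)\<in>{0::int,1} \<times> {0::int,1}. \<phi>(a,b) * Dfun L a b (n,m)) =
     \<phi>(0,0) * Dfun L 0 0 (n,m) + \<phi>(0,1) * Dfun L 0 1 (n,m) + \<phi>(1,0) * Dfun L 1 0 (n,m) + \<phi>(1,1) * Dfun L 1 1 (n,m)"
    by (rule sum4)
  have "\<phi>(n,m) = \<phi>(0,0) * Dfun L 0 0 (n,m) + \<phi>(0,1) * Dfun L 0 1 (n,m) + \<phi>(1,0) * Dfun L 1 0 (n,m) + \<phi>(1,1) * Dfun L 1 1 (n,m)"
  proof (cases "even n"; cases "even m")
    assume h: "even n" "even m"
    have "Dfun L 0 1 (n,m) = 0" "Dfun L 1 0 (n,m) = 0" "Dfun L 1 1 (n,m) = 0"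
      by (rule Dfun_zero, use h in simp)+
    moreover have "Dfun L 0 0 (n,m) = L powi ((n*m-0*0) div 2)" by (rule Dfun_val) (use h in auto)
    moreover have "\<phi>(n,m) = \<phi>(0,0) * L powi ((n*m-0*0) div 2)" by (rule Qp_at[OF Q]) (use h in simp)+
    ultimately show ?thesis by (simp only: mult_zero_right add_0_right add_0_left)
  next
    assume h: "even n" "odd m"
    have "Dfun L 0 0 (n,m) = 0" "Dfun L 1 0 (n,m) = 0" "Dfun L 1 1 (n,m) = 0"
      by (rule Dfun_zero, use h in simp)+
    moreover have "Dfun L 0 1 (n,m) = L powi ((n*m-0*1) div 2)" by (rule Dfun_val) (use h in auto)
    moreover have "\<phi>(n,m) = \<phi>(0,1) * L powi ((n*m-0*1) div 2)" by (rule Qp_at[OF Q]) (use h in simp)+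
    ultimately show ?thesis by (simp only: mult_zero_right add_0_right add_0_left)
  next
    assume h: "odd n" "even m"
    have "Dfun L 0 0 (n,m) = 0" "Dfun L 0 1 (n,m) = 0" "Dfun L 1 1 (n,m) = 0"
      by (rule Dfun_zero, use h in simp)+
    moreover have "Dfun L 1 0 (n,m) = L powi ((n*m-1*0) div 2)" by (rule Dfun_val) (use h in auto)
    moreover have "\<phi>(n,m) = \<phi>(1,0) * L powi ((n*m-1*0) div 2)" by (rule Qp_at[OF Q]) (use h in simp)+
    ultimately show ?thesis by (simp only: mult_zero_right add_0_right add_0_left)
  next
    assume h: "odd n" "odd m"
    have "Dfun L 0 0 (n,m) = 0" "Dfun L 0 1 (n,m) = 0" "Dfun L 1 0 (n,m) = 0"
      by (rule Dfun_zero, use h in simp)+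
    moreover have "Dfun L 1 1 (n,m) = L powi ((n*m-1*1) div 2)" by (rule Dfun_val) (use h in auto)
    moreover have "\<phi>(n,m) = \<phi>(1,1) * L powi ((n*m-1*1) div 2)" by (rule Qp_at[OF Q]) (use h in simp)+
    ultimately show ?thesis by (simp only: mult_zero_right add_0_right add_0_left)
  qed
  then show ?thesis unfolding S .
qed

lemma Qp_decomp:
  assumes Q: "Qp L \<phi>"
  shows "\<phi> = (\<lambda>k. \<Sum>(a, b)\<in>{0::int,1} \<times> {0::int,1}. \<phi>(a,b) * Dfun L a b k)"
proof (rule ext)
  fix k :: "int \<times> int"
  have "\<phi>(fst k, snd k) = (\<Sum>(a, b)\<in>{0::int,1} \<times> {0::int,1}. \<phi>(a,b) * Dfun L a b (fst k, snd k))"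
    by (rule Qp_decomp_pt[OF Q])
  then show "\<phi> k = (\<Sum>(a, b)\<in>{0::int,1} \<times> {0::int,1}. \<phi>(a,b) * Dfun L a b k)"
    by (simp only: prod.collapse)
qed

lemma Qp_span:
  assumes L: "L \<noteq> 0"
  shows "Qp L (\<lambda>k. \<Sum>(a, b)\<in>I. c a b * Dfun L a b k)"
  unfolding Qp_def
proof (intro allI)
  fix x y p q
  have D: "\<And>a b. Dfun L a b (x+2*p, y+2*q) = L powi (q*(x+2*p) + y*p) * Dfun L a b (x,y)"
    using Qp_Dfun[OF L] unfolding Qp_def by blast
  show "(\<Sum>(a, b)\<in>I. c a b * Dfun L a b (x + 2 * p, y + 2 * q)) =
       L powi (q * (x + 2 * p) + y * p) * (\<Sum>(a, b)\<in>I. c a b * Dfun L a b (x, y))"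
    by (simp add: D sum_distrib_left split_def mult.left_commute)
qed

lemma Qp_sigma: assumes Q: "Qp L \<phi>" shows "sigma \<phi> = \<phi>"
proof (rule ext, clarify)
  fix n m
  have "\<phi>(-n+2*n, -m+2*m) = L powi (m*(-n+2*n) + (-m)*n) * \<phi>(-n,-m)"
    using Q unfolding Qp_def by blast
  then show "sigma \<phi> (n,m) = \<phi>(n,m)" by (simp add: sigma_def algebra_simps)
qed

theorem mainTheorem5:
  fixes \<theta> :: real
  assumes "\<theta> \<notin> \<rat>"
  shows "(\<forall>a\<in>{0,1}. \<forall>b\<in>{0,1}. \<exists>!\<phi>. D_cond \<theta> a b \<phi>)
    \<and> (\<forall>a\<in>{0,1}. \<forall>b\<in>{0,1}. D \<theta> a b \<in> H0_tw \<theta>)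
    \<and> H0_tw \<theta> = {\<phi>. \<exists>c :: int \<Rightarrow> int \<Rightarrow> complex.
          \<phi> = (\<lambda>k. \<Sum>(a, b)\<in>{0,1} \<times> {0,1}. c a b * D \<theta> a b k)}
    \<and> (\<forall>c :: int \<Rightarrow> int \<Rightarrow> complex.
          (\<lambda>k. \<Sum>(a, b)\<in>{0::int,1} \<times> {0::int,1}. c a b * D \<theta> a b k) = (\<lambda>k. 0)
          \<longrightarrow> (\<forall>a\<in>{0,1}. \<forall>b\<in>{0,1}. c a b = 0))
    \<and> (\<forall>\<phi>\<in>H0_tw \<theta>. sigma \<phi> = \<phi>)"
proof (intro conjI)
  show "\<forall>a\<in>{0,1}. \<forall>b\<in>{0,1}. \<exists>!\<phi>. D_cond \<theta> a b \<phi>"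
    by (intro ballI ex1I[of _ "Dfun (lam \<theta>) _ _"], rule Dfun_cond, erule Dcond_unique)
  show "\<forall>a\<in>{0,1}. \<forall>b\<in>{0,1}. D \<theta> a b \<in> H0_tw \<theta>"
    by (simp add: D_eq Qp_H0 Qp_Dfun lam_nz)
  show "H0_tw \<theta> = {\<phi>. \<exists>c :: int \<Rightarrow> int \<Rightarrow> complex.
          \<phi> = (\<lambda>k. \<Sum>(a, b)\<in>{0,1} \<times> {0,1}. c a b * D \<theta> a b k)}"
  proof (intro set_eqI iffI)
    fix \<phi> assume "\<phi> \<in> H0_tw \<theta>"
    then have "Qp (lam \<theta>) \<phi>" by (rule H0_Qp)
    then show "\<phi> \<in> {\<phi>. \<exists>c :: int \<Rightarrow> int \<Rightarrow> complex.
          \<phi> = (\<lambda>k. \<Sum>(a, b)\<in>{0,1} \<times> {0,1}. c a b * D \<theta> a b k)}"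
      apply (intro CollectI exI[of _ "\<lambda>a b. \<phi>(a,b)"])
      unfolding D_eq by (rule Qp_decomp)
  next
    fix \<phi> assume "\<phi> \<in> {\<phi>. \<exists>c :: int \<Rightarrow> int \<Rightarrow> complex.
          \<phi> = (\<lambda>k. \<Sum>(a, b)\<in>{0,1} \<times> {0,1}. c a b * D \<theta> a b k)}"
    then obtain c :: "int \<Rightarrow> int \<Rightarrow> complex" where
      "\<phi> = (\<lambda>k. \<Sum>(a, b)\<in>{0,1} \<times> {0,1}. c a b * Dfun (lam \<theta>) a b k)"
      by (auto simp: D_eq)
    then show "\<phi> \<in> H0_tw \<theta>" by (simp only:) (rule Qp_H0[OF Qp_span[OF lam_nz]])
  qed
  show "\<forall>c :: int \<Rightarrow> int \<Rightarrow> complex.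
          (\<lambda>k. \<Sum>(a, b)\<in>{0::int,1} \<times> {0::int,1}. c a b * D \<theta> a b k) = (\<lambda>k. 0)
          \<longrightarrow> (\<forall>a\<in>{0,1}. \<forall>b\<in>{0,1}. c a b = 0)"
  proof (intro allI impI)
    fix c :: "int \<Rightarrow> int \<Rightarrow> complex"
    assume h: "(\<lambda>k. \<Sum>(a, b)\<in>{0::int,1} \<times> {0::int,1}. c a b * D \<theta> a b k) = (\<lambda>k. 0)"
    have h': "\<And>k. c 0 0 * Dfun (lam \<theta>) 0 0 k + c 0 1 * Dfun (lam \<theta>) 0 1 k
        + c 1 0 * Dfun (lam \<theta>) 1 0 k + c 1 1 * Dfun (lam \<theta>) 1 1 k = 0"
      using fun_cong[OF h] by (simp only: sum4 D_eq)
    show "\<forall>a\<in>{0,1}. \<forall>b\<in>{0,1}. c a b = 0"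
      using h'[of "(0,0)"] h'[of "(0,1)"] h'[of "(1,0)"] h'[of "(1,1)"]
      by (simp add: Dfun_def)
  qed
  show "\<forall>\<phi>\<in>H0_tw \<theta>. sigma \<phi> = \<phi>" using H0_Qp Qp_sigma by blast
qed

end
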